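(* In the session calculus, strong fairness of groups of components (SG) coincides with strong fairness of components (SC), i.e. a path is SG-fair iff it is SC-fair. Moreover, weak fairness of groups of components (WG) is weaker than weak fairness of components (WC): every WC-fair path is WG-fair.
   Context: Session calculus: threads $P ::= \mathbf{end} \mid \bigoplus_{i\in I} p_i!\lambda_i;P_i \mid \sum_{i\in I} p_i?\lambda_i;P_i \mid X \mid \mu X.P$ (guarded recursion), thread states additionally $\langle q!\lambda\rangle;P$; networks $p[\![P]\!]\mid 0\mid N\parallel N$ with distinct locations and closed threads, modulo associativity/commutativity/unit. Transitions: (choice) $p[\![\bigoplus_{i\in I}p_i!\lambda_i;P_i]\!]\parallel N \xrightarrow{\tau} p[\![\langle p_k!\lambda_k\rangle;P_k]\!]\parallel N$; (unfold) $p[\![\mu X.P]\!]\parallel N\xrightarrow{\tau} p[\![P\{\mu X.P/X\}]\!]\parallel N$; (comm) $p_k[\![\langle q!\lambda_k\rangle;Q]\!]\parallel q[\![\sum_{i\in I}p_i?\lambda_i;P_i]\!]\parallel N \xrightarrow{(p_k,\lambda_k,q)} p_k[\![Q]\!]\parallel q[\![P_k]\!]\parallel N$. $\mathrm{comp}(t)$ is the moving location for a $\tau$-transition and $\{p,q\}$ for label $(p,\lambda,q)$. A path is a network state with a maximal sequence of transitions. For a notion of task (with "enabled in a state" and "engaged in by a path"): a task is relentlessly enabled on a path if every suffix contains a state where it is enabled, perpetually enabled if enabled in every state; a path $\pi$ is strongly fair if for every suffix $\pi'$ each task relentlessly enabled on $\pi'$ is engaged in by $\pi'$, and weakly fair if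 for every suffix $\pi'$ each task perpetually enabled on $\pi'$ is engaged in by $\pi'$. Components (SC/WC): tasks are locations $p$; enabled in $N$ if some transition $t$ from $N$ has $p\in\mathrm{comp}(t)$; engaged in if the path contains $t$ with $p\in\mathrm{comp}(t)$. Groups of components (SG/WG): tasks are sets $G$ of locations; enabled in $N$ if some transition $t$ from $N$ has $\mathrm{comp}(t)=G$; engaged in if the path contains $t$ with $\mathrm{comp}(t)=G$. *)

theory Defs
  imports Main "HOL-Library.Extended_Nat"
begin

text \<open>Threads and thread states in one datatype. Index sets of internal/external
  choices are rendered as finite lists of triples (location, label, continuation).
  The constructor Out q l P is the thread state with a committed output q!l.\<close>

datatype ('loc, 'lab, 'var) thread =
    End
  | Choice "('loc \<times> 'lab \<times> ('loc, 'lab, 'var) thread) list"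
  | Branch "('loc \<times> 'lab \<times> ('loc, 'lab, 'var) thread) list"
  | Var 'var
  | Mu 'var "('loc, 'lab, 'var) thread"
  | Out 'loc 'lab "('loc, 'lab, 'var) thread"

fun fvs :: "('loc, 'lab, 'var) thread \<Rightarrow> 'var set" where
  "fvs End = {}"
| "fvs (Choice xs) = (\<Union>x\<in>set xs. fvs (snd (snd x)))"
| "fvs (Branch xs) = (\<Union>x\<in>set xs. fvs (snd (snd x)))"
| "fvs (Var X) = {X}"
| "fvs (Mu X P) = fvs P - {X}"
| "fvs (Out q l P) = fvs P"

fun unguarded :: "('loc, 'lab, 'var) thread \<Rightarrow> 'var set" where
  "unguarded End = {}"
| "unguarded (Choice xs) = {}"
| "unguarded (Branch xs) = {}"
| "unguarded (Var X) = {X}"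
| "unguarded (Mu X P) = unguarded P - {X}"
| "unguarded (Out q l P) = {}"

fun guarded :: "('loc, 'lab, 'var) thread \<Rightarrow> bool" where
  "guarded End = True"
| "guarded (Choice xs) = (\<forall>x\<in>set xs. guarded (snd (snd x)))"
| "guarded (Branch xs) = (\<forall>x\<in>set xs. guarded (snd (snd x)))"
| "guarded (Var X) = True"
| "guarded (Mu X P) = (X \<notin> unguarded P \<and> guarded P)"
| "guarded (Out q l P) = guarded P"

fun is_thread :: "('loc, 'lab, 'var) thread \<Rightarrow> bool" where
  "is_thread End = True"
| "is_thread (Choice xs) = (xs \<noteq> [] \<and> (\<forall>x\<in>set xs. is_thread (snd (snd x))))"
| "is_thread (Branch xs) = (xs \<noteq> [] \<and> (\<forall>x\<in>set xs. is_thread (snd (snd x))))"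
| "is_thread (Var X) = True"
| "is_thread (Mu X P) = is_thread P"
| "is_thread (Out q l P) = False"

definition wf_proc :: "('loc, 'lab, 'var) thread \<Rightarrow> bool" where
  "wf_proc P \<longleftrightarrow> is_thread P \<and> fvs P = {} \<and> guarded P"

fun wf_tstate :: "('loc, 'lab, 'var) thread \<Rightarrow> bool" where
  "wf_tstate (Out q l P) = wf_proc P"
| "wf_tstate P = wf_proc P"

text \<open>Substitution (capture is not an issue since only closed terms are substituted).\<close>
fun subst :: "'var \<Rightarrow> ('loc, 'lab, 'var) thread \<Rightarrow> ('loc, 'lab, 'var) thread \<Rightarrow> ('loc, 'lab, 'var) thread" where
  "subst X Q End = End"
| "subst X Q (Choice xs) = Choice (map (\<lambda>(q, l, P). (q, l, subst X Q P)) xs)"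
| "subst X Q (Branch xs) = Branch (map (\<lambda>(q, l, P). (q, l, subst X Q P)) xs)"
| "subst X Q (Var Y) = (if X = Y then Q else Var Y)"
| "subst X Q (Mu Y P) = (if X = Y then Mu Y P else Mu Y (subst X Q P))"
| "subst X Q (Out q l P) = Out q l (subst X Q P)"

text \<open>Networks modulo ACU with distinct locations: finite partial maps from locations
  to thread states.\<close>
type_synonym ('loc, 'lab, 'var) net = "'loc \<Rightarrow> ('loc, 'lab, 'var) thread option"

definition wf_net :: "('loc, 'lab, 'var) net \<Rightarrow> bool" where
  "wf_net N \<longleftrightarrow> finite (dom N) \<and> (\<forall>p P. N p = Some P \<longrightarrow> wf_tstate P)"

datatype ('loc, 'lab) act = Tau 'loc | Comm 'loc 'lab 'loc

fun comp :: "('loc, 'lab) act \<Rightarrow> 'loc set" where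
  "comp (Tau p) = {p}"
| "comp (Comm p l q) = {p, q}"

inductive step :: "('loc, 'lab, 'var) net \<Rightarrow> ('loc, 'lab) act \<Rightarrow> ('loc, 'lab, 'var) net \<Rightarrow> bool" where
  choice: "\<lbrakk> N p = Some (Choice xs); k < length xs; xs ! k = (q, l, P) \<rbrakk>
           \<Longrightarrow> step N (Tau p) (N(p \<mapsto> Out q l P))"
| unfold: "N p = Some (Mu X P) \<Longrightarrow> step N (Tau p) (N(p \<mapsto> subst X (Mu X P) P))"
| comm: "\<lbrakk> N p = Some (Out q l Q); N q = Some (Branch ys); k < length ys; ys ! k = (p, l, P) \<rbrakk>
         \<Longrightarrow> step N (Comm p l q) (N(p \<mapsto> Q, q \<mapsto> P))"

text \<open>A path is given by states s 0, s 1, ..., transitions a 0, a 1, ... and its length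
  len (number of transitions, possibly infinite). It is maximal: if finite, its last
  state has no outgoing transition. Values of s and a beyond len are irrelevant.\<close>
definition is_path :: "(nat \<Rightarrow> ('loc, 'lab, 'var) net) \<Rightarrow> (nat \<Rightarrow> ('loc, 'lab) act) \<Rightarrow> enat \<Rightarrow> bool" where
  "is_path s a len \<longleftrightarrow>
     (\<forall>i. enat i < len \<longrightarrow> step (s i) (a i) (s (Suc i))) \<and>
     (\<forall>n. len = enat n \<longrightarrow> \<not> (\<exists>t N'. step (s n) t N'))"

text \<open>en N T: task T enabled in state N; eng t T: transition t engages in task T.
  The suffix starting at state index j (j \<le> len) is considered.\<close>

definition relentlessly_enabled where
  "relentlessly_enabled en s (len :: enat) j T \<longleftrightarrow>
     (\<forall>k. j \<le> k \<and> enat k \<le> len \<longrightarrow> (\<exists>m. k \<le> m \<and> enat m \<le> len \<and> en (s m) T))"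

definition perpetually_enabled where
  "perpetually_enabled en s (len :: enat) j T \<longleftrightarrow>
     (\<forall>m. j \<le> m \<and> enat m \<le> len \<longrightarrow> en (s m) T)"

definition engaged where
  "engaged eng a (len :: enat) j T \<longleftrightarrow> (\<exists>m. j \<le> m \<and> enat m < len \<and> eng (a m) T)"

definition strongly_fair where
  "strongly_fair en eng s a len \<longleftrightarrow>
     (\<forall>j T. enat j \<le> len \<longrightarrow> relentlessly_enabled en s len j T \<longrightarrow> engaged eng a len j T)"

definition weakly_fair where
  "weakly_fair en eng s a len \<longleftrightarrow>
     (\<forall>j T. enat j \<le> len \<longrightarrow> perpetually_enabled en s len j T \<longrightarrow> engaged eng a len j T)"

definition en_C :: "('loc, 'lab, 'var) net \<Rightarrow> 'loc \<Rightarrow> bool" where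
  "en_C N p \<longleftrightarrow> (\<exists>t N'. step N t N' \<and> p \<in> comp t)"

definition eng_C :: "('loc, 'lab) act \<Rightarrow> 'loc \<Rightarrow> bool" where
  "eng_C t p \<longleftrightarrow> p \<in> comp t"

definition en_G :: "('loc, 'lab, 'var) net \<Rightarrow> 'loc set \<Rightarrow> bool" where
  "en_G N G \<longleftrightarrow> (\<exists>t N'. step N t N' \<and> comp t = G)"

definition eng_G :: "('loc, 'lab) act \<Rightarrow> 'loc set \<Rightarrow> bool" where
  "eng_G t G \<longleftrightarrow> comp t = G"

definition SC_fair where "SC_fair s a len \<longleftrightarrow> strongly_fair en_C eng_C s a len"
definition WC_fair where "WC_fair s a len \<longleftrightarrow> weakly_fair en_C eng_C s a len"
definition SG_fair where "SG_fair s a len \<longleftrightarrow> strongly_fair en_G eng_G s a len"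
definition WG_fair where "WG_fair s a len \<longleftrightarrow> weakly_fair en_G eng_G s a len"

end

theory Submission
  imports Defs
begin

fun pick :: "('loc, 'lab) act \<Rightarrow> 'loc" where
  "pick (Tau p) = p"
| "pick (Comm p l q) = p"

lemma pick_comp: "pick t \<in> comp t"
  by (cases t) auto

lemma step_other: "step N t N' \<Longrightarrow> p \<notin> comp t \<Longrightarrow> N' p = N p"
  by (induct rule: step.induct) auto

lemma step_dom: "step N t N' \<Longrightarrow> dom N' = dom N"
  by (induct rule: step.induct) (auto split: if_splits)

lemma step_comp_dom: "step N t N' \<Longrightarrow> comp t \<subseteq> dom N"
  by (induct rule: step.induct) auto

lemma same_comp:
  assumes "step N t N1" "step N' t' N2" "N' (pick t) = N (pick t)" "pick t \<in> comp t'"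
  shows "comp t' = comp t"
  using assms(1)
proof cases
  case (choice p xs k q l P)
  then have "N' p = Some (Choice xs)" "pick t = p" using assms(3) by auto
  with assms(2,4) show ?thesis using choice by cases auto
next
  case (unfold p X P)
  then have "N' p = Some (Mu X P)" "pick t = p" using assms(3) by auto
  with assms(2,4) show ?thesis using unfold by cases auto
next
  case (comm p q l Q ys k P)
  then have "N' p = Some (Out q l Q)" "pick t = p" using assms(3) by auto
  with assms(2,4) show ?thesis using comm by cases auto
qed

lemma stay:
  assumes "is_path s a len" "j \<le> n" "enat n \<le> len"
    "\<forall>i. j \<le> i \<and> i < n \<longrightarrow> p \<notin> comp (a i)"
  shows "s n p = s j p"
  using assms(2,3,4)
proof (induction n rule: dec_induct)
  case base
  then show ?case by simp
next
  case (step k)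
  have "enat k < len" using step.prems(1) step.hyps
    by (metis Suc_ile_eq)
  then have "step (s k) (a k) (s (Suc k))" using assms(1) unfolding is_path_def by blast
  moreover have "p \<notin> comp (a k)" using step.prems(2) step.hyps by auto
  ultimately have "s (Suc k) p = s k p" by (rule step_other)
  moreover have "s k p = s j p" using step.IH step.prems step.hyps
    by (metis Suc_ile_eq less_Suc_eq order_less_imp_le)
  ultimately show ?case by simp
qed

lemma key:
  assumes path: "is_path s a len" and st: "step (s j) t N'"
    and ex: "\<exists>n. j \<le> n \<and> enat n < len \<and> pick t \<in> comp (a n)"
  shows "\<exists>n. j \<le> n \<and> enat n < len \<and> comp (a n) = comp t"
proof -
  let ?P = "\<lambda>n. j \<le> n \<and> enat n < len \<and> pick t \<in> comp (a n)"
  define n where "n = (LEAST n. ?P n)"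
  have n: "?P n" unfolding n_def using ex by (rule LeastI_ex)
  have least: "\<And>i. ?P i \<Longrightarrow> n \<le> i" unfolding n_def by (rule Least_le)
  have nomove: "\<forall>i. j \<le> i \<and> i < n \<longrightarrow> pick t \<notin> comp (a i)"
  proof (intro allI impI)
    fix i assume i: "j \<le> i \<and> i < n"
    then have "enat i < len" using n by (meson enat_ord_simps(2) order_less_trans)
    show "pick t \<notin> comp (a i)"
    proof
      assume "pick t \<in> comp (a i)"
      then have "n \<le> i" using least i \<open>enat i < len\<close> by blast
      then show False using i by simp
    qed
  qed
  have "s n (pick t) = s j (pick t)"
    using stay[OF path _ _ nomove] n by (simp add: order_less_imp_le)
  moreover have "step (s n) (a n) (s (Suc n))" using path n unfolding is_path_def by blast
  ultimately have "comp (a n) = comp t" using same_comp[OF st] n by blast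
  then show ?thesis using n by blast
qed

lemma SC_SG:
  assumes path: "is_path s a len" and sc: "SC_fair s a len"
  shows "SG_fair s a len"
  unfolding SG_fair_def strongly_fair_def
proof (intro allI impI)
  fix j G
  assume j: "enat j \<le> len" and rel: "relentlessly_enabled en_G s len j G"
  obtain m where m: "j \<le> m" "enat m \<le> len" "en_G (s m) G"
    using rel j unfolding relentlessly_enabled_def by blast
  then obtain t N' where t: "step (s m) t N'" "comp t = G" unfolding en_G_def by blast
  have "relentlessly_enabled en_C s len m (pick t)"
    unfolding relentlessly_enabled_def
  proof (intro allI impI)
    fix k assume k: "m \<le> k \<and> enat k \<le> len"
    then obtain m' where "k \<le> m'" "enat m' \<le> len" "en_G (s m') G"
      using rel m unfolding relentlessly_enabled_def by (meson order_trans)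
    then show "\<exists>m'. k \<le> m' \<and> enat m' \<le> len \<and> en_C (s m') (pick t)"
      using t pick_comp unfolding en_G_def en_C_def by blast
  qed
  then have "engaged eng_C a len m (pick t)"
    using sc m unfolding SC_fair_def strongly_fair_def by blast
  then have "\<exists>n. m \<le> n \<and> enat n < len \<and> pick t \<in> comp (a n)"
    unfolding engaged_def eng_C_def by blast
  from key[OF path t(1) this] obtain n where "m \<le> n" "enat n < len" "comp (a n) = G"
    using t by auto
  then show "engaged eng_G a len j G"
    unfolding engaged_def eng_G_def using m by (intro exI[of _ n]) auto
qed

lemma WC_WG:
  assumes path: "is_path s a len" and wc: "WC_fair s a len"
  shows "WG_fair s a len"
  unfolding WG_fair_def weakly_fair_def
proof (intro allI impI)
  fix j G
  assume j: "enat j \<le> len" and per: "perpetually_enabled en_G s len j G"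
  have "en_G (s j) G" using per j unfolding perpetually_enabled_def by blast
  then obtain t N' where t: "step (s j) t N'" "comp t = G" unfolding en_G_def by blast
  have "perpetually_enabled en_C s len j (pick t)"
    using per t pick_comp unfolding perpetually_enabled_def en_G_def en_C_def by blast
  then have "engaged eng_C a len j (pick t)"
    using wc j unfolding WC_fair_def weakly_fair_def by blast
  then have "\<exists>n. j \<le> n \<and> enat n < len \<and> pick t \<in> comp (a n)"
    unfolding engaged_def eng_C_def by blast
  from key[OF path t(1) this] show "engaged eng_G a len j G"
    unfolding engaged_def eng_G_def using t by auto
qed

lemma dom_inf:
  assumes "is_path s a \<infinity>"
  shows "dom (s m) = dom (s 0)"
proof (induction m)
  case 0 then show ?case by simp
next
  case (Suc m)
  have "step (s m) (a m) (s (Suc m))" using assms unfolding is_path_def by simp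
  then show ?case using Suc step_dom by metis
qed

lemma SG_SC:
  assumes wf: "wf_net (s 0)" and path: "is_path s a len" and sg: "SG_fair s a len"
  shows "SC_fair s a len"
  unfolding SC_fair_def strongly_fair_def
proof (intro allI impI)
  fix j p
  assume j: "enat j \<le> len" and rel: "relentlessly_enabled en_C s len j p"
  show "engaged eng_C a len j p"
  proof (cases len)
    case (enat n)
    then have "j \<le> n" using j by simp
    then obtain m where "n \<le> m" "enat m \<le> len" "en_C (s m) p"
      using rel enat unfolding relentlessly_enabled_def by auto
    then have "m = n" using enat by simp
    then show ?thesis using \<open>en_C (s m) p\<close> path enat unfolding is_path_def en_C_def by blast
  next
    case infinity
    define M where "M = {m. j \<le> m \<and> en_C (s m) p}"
    define f where "f = (\<lambda>m. SOME G. en_G (s m) G \<and> p \<in> G)"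
    have fM: "\<And>m. m \<in> M \<Longrightarrow> en_G (s m) (f m) \<and> p \<in> f m"
    proof -
      fix m assume "m \<in> M"
      then have "\<exists>G. en_G (s m) G \<and> p \<in> G" unfolding M_def en_C_def en_G_def by blast
      then show "en_G (s m) (f m) \<and> p \<in> f m" unfolding f_def by (rule someI_ex)
    qed
    have infM: "infinite M"
      unfolding infinite_nat_iff_unbounded_le
    proof
      fix k
      have "\<exists>m\<ge>max j k. enat m \<le> len \<and> en_C (s m) p"
        using rel infinity unfolding relentlessly_enabled_def by (auto dest!: spec[of _ "max j k"])
      then obtain m where "max j k \<le> m" "en_C (s m) p" by blast
      then show "\<exists>m\<ge>k. m \<in> M" unfolding M_def by auto
    qed
    have "f ` M \<subseteq> Pow (dom (s 0))"
    proof
      fix G assume "G \<in> f ` M"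
      then obtain m where "m \<in> M" "G = f m" by blast
      then obtain t N' where "step (s m) t N'" "comp t = G" using fM unfolding en_G_def by blast
      then show "G \<in> Pow (dom (s 0))"
        using step_comp_dom[of "s m" t N'] dom_inf[of s a m] path infinity by auto
    qed
    moreover have "finite (dom (s 0))" using wf unfolding wf_net_def by simp
    ultimately have "finite (f ` M)" by (meson finite_Pow_iff finite_subset)
    then obtain m0 where m0: "m0 \<in> M" "infinite {m \<in> M. f m = f m0}"
      using pigeonhole_infinite[OF infM] by blast
    have "relentlessly_enabled en_G s len j (f m0)"
      unfolding relentlessly_enabled_def
    proof (intro allI impI)
      fix k
      obtain m where "m \<ge> k" "m \<in> {m \<in> M. f m = f m0}"
        using m0(2) unfolding infinite_nat_iff_unbounded_le by blast
      then show "\<exists>m\<ge>k. enat m \<le> len \<and> en_G (s m) (f m0)"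
        using fM infinity by force
    qed
    then have "engaged eng_G a len j (f m0)"
      using sg j unfolding SG_fair_def strongly_fair_def by blast
    then obtain n where "j \<le> n" "enat n < len" "comp (a n) = f m0"
      unfolding engaged_def eng_G_def by blast
    moreover have "p \<in> f m0" using fM[OF m0(1)] by blast
    ultimately show ?thesis unfolding engaged_def eng_C_def by blast
  qed
qed

theorem mainTheorem12:
  fixes s :: "nat \<Rightarrow> ('loc, 'lab, 'var) net" and a :: "nat \<Rightarrow> ('loc, 'lab) act" and len :: enat
  assumes "wf_net (s 0)" and "is_path s a len"
  shows "(SG_fair s a len \<longleftrightarrow> SC_fair s a len) \<and> (WC_fair s a len \<longrightarrow> WG_fair s a len)"
  using SG_SC[OF assms] SC_SG[OF assms(2)] WC_WG[OF assms(2)] by blast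

end
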